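(* Let $Q\in\mathcal{Q}(n,d,m)$ and let $A=(a_1,\dots,a_t)$, $t\geq1$, be a chain of paths in $Q$ such that $\underline{\delta}=2\sum_{i=1}^t\mathrm{mdeg}(a_i)\in\Omega_0(Q)$. Then $|\underline{\delta}|-mt-n_0\leq n$, where $n_0=0$ if $t=1$, $n_0=\#(V(a_1)\cap V(a_2))$ if $t=2$, and $n_0=\#(V(a_2)\cup\cdots\cup V(a_{t-1}))$ if $t\geq3$.
   Context: A quiver $Q$ is a finite oriented graph; for an arrow $a$, $a''$ is its tail and $a'$ its head. A path $a=a_1\cdots a_s$ ($a_i$ arrows) satisfies $a_i'=a_{i+1}''$; it is closed if $a_1''=a_s'$; $V(a)=\{a_1'',a_1',\dots,a_s'\}$, $A(a)=\{a_1,\dots,a_s\}$. A closed path is primitive if each vertex of $V(a)$ is the head of exactly one $a_i$. $m(Q)$ is the maximal degree of a primitive closed path; $Q$ is strongly connected if some closed path contains all vertices; $\mathcal{Q}(n,d,m)$ is the set of strongly connected quivers with $n$ vertices, $d$ arrows and $m(Q)=m$. The multidegree $\mathrm{mdeg}(a)\in\mathbb{N}^{\#A(Q)}$ of a path $a$ has $b$-component equal to the number of $i$ with $a_i=b$; $|\underline{\delta}|=\sum_b\delta_b$. $\Omega_0(Q)$ is the set of $\mathrm{mdeg}(h)$ for closed paths $h$ in $Q$ with $A(h)=A(Q)$. A chain of paths $(a_1,\dots,a_t)$ is an ordered sequence of primitive closed paths such that $V(a_i)\cap V(a_j)=\emptyset$ if $|i-j|>1$ and $V(a_i)\cap V(a_j)\neq\emptyset$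 if $|i-j|\leq1$. *)

theory Defs
  imports Main
begin

text \<open>A quiver is given by a vertex set Vs, an arrow set As, and tail/head maps
  (tail a = a'' and head a = a').  Multiple arrows and loops are allowed.\<close>

definition quiver :: "'v set \<Rightarrow> 'a set \<Rightarrow> ('a \<Rightarrow> 'v) \<Rightarrow> ('a \<Rightarrow> 'v) \<Rightarrow> bool" where
  "quiver Vs As tail head \<longleftrightarrow> finite Vs \<and> finite As \<and>
     (\<forall>b\<in>As. tail b \<in> Vs \<and> head b \<in> Vs)"

definition is_path :: "'a set \<Rightarrow> ('a \<Rightarrow> 'v) \<Rightarrow> ('a \<Rightarrow> 'v) \<Rightarrow> 'a list \<Rightarrow> bool" where
  "is_path As tail head p \<longleftrightarrow> p \<noteq> [] \<and> set p \<subseteq> As \<and>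
     (\<forall>i. Suc i < length p \<longrightarrow> head (p ! i) = tail (p ! Suc i))"

definition is_closed_path :: "'a set \<Rightarrow> ('a \<Rightarrow> 'v) \<Rightarrow> ('a \<Rightarrow> 'v) \<Rightarrow> 'a list \<Rightarrow> bool" where
  "is_closed_path As tail head p \<longleftrightarrow> is_path As tail head p \<and> tail (hd p) = head (last p)"

definition pverts :: "('a \<Rightarrow> 'v) \<Rightarrow> ('a \<Rightarrow> 'v) \<Rightarrow> 'a list \<Rightarrow> 'v set" where
  "pverts tail head p = insert (tail (hd p)) (head ` set p)"

definition parrows :: "'a list \<Rightarrow> 'a set" where
  "parrows p = set p"

definition is_primitive :: "'a set \<Rightarrow> ('a \<Rightarrow> 'v) \<Rightarrow> ('a \<Rightarrow> 'v) \<Rightarrow> 'a list \<Rightarrow> bool" where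
  "is_primitive As tail head p \<longleftrightarrow> is_closed_path As tail head p \<and>
     (\<forall>v\<in>pverts tail head p. card {i. i < length p \<and> head (p ! i) = v} = 1)"

definition mQ :: "'a set \<Rightarrow> ('a \<Rightarrow> 'v) \<Rightarrow> ('a \<Rightarrow> 'v) \<Rightarrow> nat" where
  "mQ As tail head = Max {length p | p. is_primitive As tail head p}"

definition strongly_connected :: "'v set \<Rightarrow> 'a set \<Rightarrow> ('a \<Rightarrow> 'v) \<Rightarrow> ('a \<Rightarrow> 'v) \<Rightarrow> bool" where
  "strongly_connected Vs As tail head \<longleftrightarrow>
     (\<exists>p. is_closed_path As tail head p \<and> Vs \<subseteq> pverts tail head p)"

definition mdeg :: "'a list \<Rightarrow> 'a \<Rightarrow> nat" where
  "mdeg p b = count_list p b"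

definition mdeg_size :: "'a set \<Rightarrow> ('a \<Rightarrow> nat) \<Rightarrow> nat" where
  "mdeg_size As \<delta> = (\<Sum>b\<in>As. \<delta> b)"

definition Omega0 :: "'a set \<Rightarrow> ('a \<Rightarrow> 'v) \<Rightarrow> ('a \<Rightarrow> 'v) \<Rightarrow> ('a \<Rightarrow> nat) set" where
  "Omega0 As tail head = {mdeg h | h. is_closed_path As tail head h \<and> parrows h = As}"

text \<open>Chain of paths (a_1,...,a_t), stored 0-indexed as a list.\<close>
definition is_chain :: "'a set \<Rightarrow> ('a \<Rightarrow> 'v) \<Rightarrow> ('a \<Rightarrow> 'v) \<Rightarrow> 'a list list \<Rightarrow> bool" where
  "is_chain As tail head cs \<longleftrightarrow>
     (\<forall>i<length cs. is_primitive As tail head (cs ! i)) \<and>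
     (\<forall>i<length cs. \<forall>j<length cs.
        (i + 1 < j \<or> j + 1 < i \<longrightarrow> pverts tail head (cs ! i) \<inter> pverts tail head (cs ! j) = {}) \<and>
        (i \<le> j + 1 \<and> j \<le> i + 1 \<longrightarrow> pverts tail head (cs ! i) \<inter> pverts tail head (cs ! j) \<noteq> {}))"

end

theory Submission
  imports Defs
begin

lemma prim_len:
  assumes "is_primitive As tail head p"
  shows "length p \<le> card (pverts tail head p)"
proof -
  have inj: "inj_on (\<lambda>i. head (p!i)) {..<length p}"
  proof (rule inj_onI)
    fix i j assume i: "i \<in> {..<length p}" and j: "j \<in> {..<length p}"
      and eq: "head (p!i) = head (p!j)"
    let ?v = "head (p!i)"
    have "?v \<in> pverts tail head p" using i unfolding pverts_def by auto
    hence "card {k. k < length p \<and> head (p!k) = ?v} = 1"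
      using assms unfolding is_primitive_def by blast
    then obtain x where x: "{k. k < length p \<and> head (p!k) = ?v} = {x}"
      using card_1_singletonE by blast
    have "i \<in> {x}" "j \<in> {x}" using i j eq by (auto simp flip: x)
    thus "i = j" by simp
  qed
  have sub: "(\<lambda>i. head (p!i)) ` {..<length p} \<subseteq> pverts tail head p"
    unfolding pverts_def by auto
  have fin: "finite (pverts tail head p)" unfolding pverts_def by simp
  show ?thesis using card_inj_on_le[OF inj sub fin] by simp
qed

lemma prim_sub:
  assumes "quiver Vs As tail head" "is_primitive As tail head p"
  shows "pverts tail head p \<subseteq> Vs"
proof -
  have "p \<noteq> []" "set p \<subseteq> As" using assms(2)
    unfolding is_primitive_def is_closed_path_def is_path_def by auto
  thus ?thesis using assms(1) unfolding quiver_def pverts_def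
    by (auto simp: hd_in_set subsetD)
qed

lemma prim_le_mQ:
  assumes "quiver Vs As tail head" "is_primitive As tail head p"
  shows "length p \<le> mQ As tail head"
proof -
  have "{length p | p. is_primitive As tail head p} \<subseteq> {..card Vs}"
  proof
    fix x assume "x \<in> {length p | p. is_primitive As tail head p}"
    then obtain q where q: "x = length q" "is_primitive As tail head q" by blast
    have "card (pverts tail head q) \<le> card Vs"
      using prim_sub[OF assms(1) q(2)] assms(1) card_mono unfolding quiver_def by blast
    thus "x \<in> {..card Vs}" using prim_len[OF q(2)] q(1) by simp
  qed
  hence "finite {length p | p. is_primitive As tail head p}" using finite_subset by blast
  thus ?thesis unfolding mQ_def using assms(2) by (intro Max_ge) auto
qed

lemma count_bound:
  fixes V :: "nat \<Rightarrow> 'v set"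
  assumes fin: "\<And>i. i < t \<Longrightarrow> finite (V i)" and finN: "finite N"
    and adj: "\<And>v i j. i < t \<Longrightarrow> j < t \<Longrightarrow> v \<in> V i \<Longrightarrow> v \<in> V j \<Longrightarrow> i \<noteq> j
              \<Longrightarrow> v \<in> N \<and> (j = i + 1 \<or> i = j + 1)"
  shows "(\<Sum>i<t. card (V i)) \<le> card (\<Union>i<t. V i) + card N"
proof -
  let ?U = "\<Union>i<t. V i"
  have finU: "finite ?U" using fin by auto
  have "(\<Sum>i<t. card (V i)) = (\<Sum>i<t. \<Sum>v\<in>?U. if v \<in> V i then 1 else 0)"
  proof (rule sum.cong[OF refl])
    fix i assume "i \<in> {..<t}"
    hence "V i \<subseteq> ?U" by auto
    thus "card (V i) = (\<Sum>v\<in>?U. if v \<in> V i then 1 else 0)"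
      using finU by (simp add: sum.If_cases Int_absorb1)
  qed
  also have "\<dots> = (\<Sum>v\<in>?U. \<Sum>i<t. if v \<in> V i then 1 else 0)" by (rule sum.swap)
  also have "\<dots> = (\<Sum>v\<in>?U. card {i. i < t \<and> v \<in> V i})"
  proof (rule sum.cong[OF refl])
    fix v
    have "{i. i < t \<and> v \<in> V i} = {i \<in> {..<t}. v \<in> V i}" by auto
    thus "(\<Sum>i<t. if v \<in> V i then 1 else 0) = card {i. i < t \<and> v \<in> V i}"
      by (simp add: sum.If_cases Int_def conj_commute)
  qed
  also have "\<dots> \<le> (\<Sum>v\<in>?U. 1 + (if v \<in> N then 1 else 0))"
  proof (rule sum_mono)
    fix v assume "v \<in> ?U"
    let ?S = "{i. i < t \<and> v \<in> V i}"
    have neS: "?S \<noteq> {}" using \<open>v \<in> ?U\<close> by auto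
    have finS: "finite ?S" by auto
    define i0 where "i0 = Min ?S"
    have i0: "i0 \<in> ?S" using Min_in[OF finS neS] i0_def by simp
    have le: "\<And>j. j \<in> ?S \<Longrightarrow> i0 \<le> j" using Min_le[OF finS] i0_def by simp
    have sub: "?S \<subseteq> {i0, i0 + 1}"
    proof
      fix j assume j: "j \<in> ?S"
      show "j \<in> {i0, i0+1}"
      proof (cases "j = i0")
        case False
        then have "j = i0 + 1 \<or> i0 = j + 1" using adj[of i0 j v] i0 j by auto
        thus ?thesis using le[OF j] by auto
      qed simp
    qed
    show "card ?S \<le> 1 + (if v \<in> N then 1 else 0)"
    proof (cases "v \<in> N")
      case True
      have "card ?S \<le> card {i0, i0+1}" by (rule card_mono) (use sub in auto)
      thus ?thesis using True by simp
    next
      case False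
      have "?S \<subseteq> {i0}"
      proof
        fix j assume j: "j \<in> ?S"
        show "j \<in> {i0}" using adj[of i0 j v] i0 j False by auto
      qed
      hence "card ?S \<le> card {i0}" by (intro card_mono) auto
      thus ?thesis by simp
    qed
  qed
  also have "\<dots> = card ?U + card (?U \<inter> N)"
  proof -
    have "(\<Sum>v\<in>?U. 1 + (if v \<in> N then 1 else 0)) = (\<Sum>v\<in>?U. (1::nat)) + (\<Sum>v\<in>?U. if v \<in> N then 1 else 0)"
      by (rule sum.distrib)
    also have "(\<Sum>v\<in>?U. if v \<in> N then 1 else (0::nat)) = card (?U \<inter> N)"
      using finU by (simp add: sum.If_cases Int_def)
    finally show ?thesis by simp
  qed
  also have "\<dots> \<le> card ?U + card N" using finN card_mono[OF finN, of "?U \<inter> N"] by auto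
  finally show ?thesis .
qed

theorem lemma3p7:
  fixes Vs :: "'v set" and As :: "'a set" and tail head :: "'a \<Rightarrow> 'v"
    and cs :: "'a list list"
  assumes "quiver Vs As tail head"
    and "strongly_connected Vs As tail head"
    and "is_chain As tail head cs"
    and "length cs \<ge> 1"
    and "(\<lambda>b. 2 * (\<Sum>i<length cs. mdeg (cs ! i) b)) \<in> Omega0 As tail head"
  shows "int (mdeg_size As (\<lambda>b. 2 * (\<Sum>i<length cs. mdeg (cs ! i) b)))
           - int (mQ As tail head) * int (length cs)
           - int (if length cs = 1 then 0
                  else if length cs = 2 then card (pverts tail head (cs ! 0) \<inter> pverts tail head (cs ! 1))
                  else card (\<Union>i\<in>{1..length cs - 2}. pverts tail head (cs ! i)))
         \<le> int (card Vs)"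
proof -
  let ?t = "length cs"
  let ?V = "\<lambda>i. pverts tail head (cs ! i)"
  let ?m = "mQ As tail head"
  define N where "N = (if ?t = 1 then {}
                  else if ?t = 2 then ?V 0 \<inter> ?V 1
                  else (\<Union>i\<in>{1..?t - 2}. ?V i))"
  have prim: "\<And>i. i < ?t \<Longrightarrow> is_primitive As tail head (cs ! i)"
    using assms(3) unfolding is_chain_def by blast
  have disj: "\<And>i j. i < ?t \<Longrightarrow> j < ?t \<Longrightarrow> i + 1 < j \<or> j + 1 < i \<Longrightarrow> ?V i \<inter> ?V j = {}"
    using assms(3) unfolding is_chain_def by blast
  have finA: "finite As" and finVs: "finite Vs" using assms(1) unfolding quiver_def by auto
  have finV: "\<And>i. finite (?V i)" unfolding pverts_def by simp
  have setA: "\<And>i. i < ?t \<Longrightarrow> set (cs ! i) \<subseteq> As"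
    using prim unfolding is_primitive_def is_closed_path_def is_path_def by blast
  have size: "mdeg_size As (\<lambda>b. 2 * (\<Sum>i<?t. mdeg (cs ! i) b)) = 2 * (\<Sum>i<?t. length (cs ! i))"
  proof -
    have "mdeg_size As (\<lambda>b. 2 * (\<Sum>i<?t. mdeg (cs ! i) b))
        = 2 * (\<Sum>i<?t. \<Sum>b\<in>As. count_list (cs ! i) b)"
      unfolding mdeg_size_def mdeg_def by (simp add: sum_distrib_left sum.swap[of _ As])
    also have "\<dots> = 2 * (\<Sum>i<?t. length (cs ! i))"
      using sum_count_set[OF setA finA] by simp
    finally show ?thesis .
  qed
  have lenm: "(\<Sum>i<?t. length (cs ! i)) \<le> ?m * ?t"
  proof -
    have "(\<Sum>i<?t. length (cs ! i)) \<le> (\<Sum>i<?t. ?m)"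
      by (rule sum_mono) (use prim_le_mQ[OF assms(1) prim] in auto)
    thus ?thesis by (simp add: mult.commute)
  qed
  have lenV: "(\<Sum>i<?t. length (cs ! i)) \<le> (\<Sum>i<?t. card (?V i))"
    by (rule sum_mono) (use prim_len[OF prim] in auto)
  have finN: "finite N" unfolding N_def using finV by auto
  have adj: "\<And>v i j. i < ?t \<Longrightarrow> j < ?t \<Longrightarrow> v \<in> ?V i \<Longrightarrow> v \<in> ?V j \<Longrightarrow> i \<noteq> j
              \<Longrightarrow> v \<in> N \<and> (j = i + 1 \<or> i = j + 1)"
  proof -
    fix v i j assume h: "i < ?t" "j < ?t" "v \<in> ?V i" "v \<in> ?V j" "i \<noteq> j"
    have ad: "j = i + 1 \<or> i = j + 1"
    proof (rule ccontr)
      assume "\<not> ?thesis"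
      hence "i + 1 < j \<or> j + 1 < i" using h(5) by auto
      thus False using disj[OF h(1,2)] h(3,4) by auto
    qed
    have "v \<in> N"
    proof (cases "?t = 1")
      case True thus ?thesis using h by auto
    next
      case t1: False
      show ?thesis
      proof (cases "?t = 2")
        case True
        hence "(i = 0 \<and> j = 1) \<or> (i = 1 \<and> j = 0)" using h by auto
        thus ?thesis using True h unfolding N_def by auto
      next
        case False
        hence t3: "?t \<ge> 3" using t1 assms(4) by auto
        have "\<exists>k\<in>{1..?t-2}. v \<in> ?V k"
        proof (cases "j = i + 1")
          case True
          show ?thesis
          proof (cases "i = 0")
            case True thus ?thesis using \<open>j = i+1\<close> h t3 by (intro bexI[of _ j]) auto
          next
            case False thus ?thesis using \<open>j = i+1\<close> h t3 by (intro bexI[of _ i]) auto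
          qed
        next
          case False
          hence ji: "i = j + 1" using ad by simp
          show ?thesis
          proof (cases "j = 0")
            case True thus ?thesis using ji h t3 by (intro bexI[of _ i]) auto
          next
            case False thus ?thesis using ji h t3 by (intro bexI[of _ j]) auto
          qed
        qed
        thus ?thesis unfolding N_def using t1 False by auto
      qed
    qed
    thus "v \<in> N \<and> (j = i + 1 \<or> i = j + 1)" using ad by simp
  qed
  have cb: "(\<Sum>i<?t. card (?V i)) \<le> card (\<Union>i<?t. ?V i) + card N"
    by (rule count_bound[OF _ finN adj]) (use finV in auto)
  have "(\<Union>i<?t. ?V i) \<subseteq> Vs" using prim_sub[OF assms(1) prim] by auto
  hence "card (\<Union>i<?t. ?V i) \<le> card Vs" using finVs card_mono by blast
  hence main: "2 * (\<Sum>i<?t. length (cs ! i)) \<le> ?m * ?t + card N + card Vs"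
    using cb lenV lenm by linarith
  have Neq: "(if ?t = 1 then 0
                  else if ?t = 2 then card (?V 0 \<inter> ?V 1)
                  else card (\<Union>i\<in>{1..?t - 2}. ?V i)) = card N"
    unfolding N_def by simp
  have "int (2 * (\<Sum>i<?t. length (cs ! i))) \<le> int (?m * ?t + card N + card Vs)"
    using main by (simp only: of_nat_le_iff)
  thus ?thesis unfolding size Neq by simp
qed

end
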